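(* Let the alphabet be countable, let $\mu:\mathcal S\to\mathbb R$ be a probability on sentences and $\mu^*:\mathcal B\to\mathbb R$ a probability measure on the Borel $\sigma$-algebra of interpretations, related by $\mu^*(\mathrm{Mod}(\varphi))=\mu(\varphi)$ for all $\varphi\in\mathcal S$. Then $\mu^*(\mathcal I\setminus\widehat{\mathcal I})=0$ if and only if $\mu$ is Gaifman.
   Context: Setting: higher-order logic (Church's simple theory of types, without a description operator), with Henkin semantics: an interpretation $I$ consists of domains $D_\alpha$ ($D_o=\{\mathsf T,\mathsf F\}$, $D_{\alpha\to\beta}$ a set of functions) and a valuation of constants (equality denoting identity) such that every term has a denotation; $V(t,I)$ is the denotation of a closed term $t$. An alphabet is countable if its set of constants is countable. Sentences are closed terms of type $o$, $\mathcal S$ the set of sentences; a sentence is valid if true in every interpretation. $\mathcal I$ is the set of interpretations, $\mathrm{Mod}(\varphi)=\{I\in\mathcal I:\varphi\text{ valid in }I\}$, and $\mathcal B$ is the Borel $\sigma$-algebra of the topology on $\mathcal I$ with basis $\{\mathrm{Mod}(\varphi)\}$ (equal, for countable alphabet, to the $\sigma$-algebra generated by these sets). $I$ is separating if for every pair $r,s$ of closed terms of the same function type $\alpha\to\beta$ with $V(r,I)\neq V(s,I)$ there is a closed term $t$ of type $\alpha$ (over the alphabet) with $V((r\,t),I)\neq V((s\,t),I)$; $\widehat{\mathcal I}$ is the set of separating interpretations (it is $\mathcal B$-measurable). A probability on sentences is a non-negative $\mu:\mathcal S\to\mathbb R$ with $\mu(\varphi)=1$ for valid $\varphi$ and $\mu(\varphi\vee\psi)=\mu(\varphi)+\mu(\psi)$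 whenever $\neg(\varphi\wedge\psi)$ is valid. $\mu$ is Gaifman if for every pair $r,s$ of closed terms of the same function type $\alpha\to\beta$, $\mu(r=s)=\inf_{\{t_1,\dots,t_n\}}\mu(\bigwedge_{i=1}^n((r\,t_i)=(s\,t_i)))$ over all finite sets of closed terms of type $\alpha$. *)

theory Defs
  imports "HOL-Probability.Probability"
begin

section \<open>Syntax of Church's simple type theory (no description operator)\<close>

datatype ty = TO | TI | TFun ty ty (infixr "\<Rightarrow>\<^sub>T" 60)

text \<open>Terms over an alphabet of constants of type 'c (each constant has a type
  given by a typing function ct).  Bound variables are de Bruijn indices
  annotated with their type.\<close>
datatype 'c tm =
    Var nat ty
  | Const 'c
  | EqC ty
  | NegC
  | ConjC
  | DisjC
  | App "'c tm" "'c tm"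
  | Abs ty "'c tm"

fun tyck :: "('c \<Rightarrow> ty) \<Rightarrow> ty list \<Rightarrow> 'c tm \<Rightarrow> ty option" where
  "tyck ct G (Var n a) = (if n < length G \<and> G ! n = a then Some a else None)"
| "tyck ct G (Const c) = Some (ct c)"
| "tyck ct G (EqC a) = Some (a \<Rightarrow>\<^sub>T a \<Rightarrow>\<^sub>T TO)"
| "tyck ct G NegC = Some (TO \<Rightarrow>\<^sub>T TO)"
| "tyck ct G ConjC = Some (TO \<Rightarrow>\<^sub>T TO \<Rightarrow>\<^sub>T TO)"
| "tyck ct G DisjC = Some (TO \<Rightarrow>\<^sub>T TO \<Rightarrow>\<^sub>T TO)"
| "tyck ct G (App s t) =
     (case tyck ct G s of
        Some (TFun a b) \<Rightarrow> (if tyck ct G t = Some a then Some b else None)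
      | _ \<Rightarrow> None)"
| "tyck ct G (Abs a t) = map_option (TFun a) (tyck ct (a # G) t)"

text \<open>Syntactic type of a term (meaningful for well-typed terms).\<close>
fun ty_of :: "('c \<Rightarrow> ty) \<Rightarrow> 'c tm \<Rightarrow> ty" where
  "ty_of ct (Var n a) = a"
| "ty_of ct (Const c) = ct c"
| "ty_of ct (EqC a) = (a \<Rightarrow>\<^sub>T a \<Rightarrow>\<^sub>T TO)"
| "ty_of ct NegC = (TO \<Rightarrow>\<^sub>T TO)"
| "ty_of ct ConjC = (TO \<Rightarrow>\<^sub>T TO \<Rightarrow>\<^sub>T TO)"
| "ty_of ct DisjC = (TO \<Rightarrow>\<^sub>T TO \<Rightarrow>\<^sub>T TO)"
| "ty_of ct (App s t) = (case ty_of ct s of TFun a b \<Rightarrow> b | _ \<Rightarrow> TO)"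
| "ty_of ct (Abs a t) = TFun a (ty_of ct t)"

definition closed_terms :: "('c \<Rightarrow> ty) \<Rightarrow> ty \<Rightarrow> 'c tm set" where
  "closed_terms ct a = {t. tyck ct [] t = Some a}"

definition Sent :: "('c \<Rightarrow> ty) \<Rightarrow> 'c tm set" where
  "Sent ct = closed_terms ct TO"

definition neg :: "'c tm \<Rightarrow> 'c tm" where "neg p = App NegC p"
definition conj :: "'c tm \<Rightarrow> 'c tm \<Rightarrow> 'c tm" where "conj p q = App (App ConjC p) q"
definition disj :: "'c tm \<Rightarrow> 'c tm \<Rightarrow> 'c tm" where "disj p q = App (App DisjC p) q"
definition eq :: "('c \<Rightarrow> ty) \<Rightarrow> 'c tm \<Rightarrow> 'c tm \<Rightarrow> 'c tm" where
  "eq ct r s = App (App (EqC (ty_of ct r)) r) s"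

text \<open>The sentence True (used as the empty conjunction).\<close>
definition true_tm :: "'c tm" where
  "true_tm = App (App (EqC (TO \<Rightarrow>\<^sub>T TO)) NegC) NegC"

fun conj_list :: "'c tm list \<Rightarrow> 'c tm" where
  "conj_list [] = true_tm"
| "conj_list [p] = p"
| "conj_list (p # ps) = conj p (conj_list ps)"

section \<open>Henkin semantics\<close>

text \<open>An interpretation with carrier 'u: domains D_a, an application operation
  (so that D_(a=>b) is, via extensionality, a set of functions D_a -> D_b),
  the two truth values, and a valuation of the constants.\<close>
record ('c, 'u) interp =
  Dom :: "ty \<Rightarrow> 'u set"
  iapp :: "'u \<Rightarrow> 'u \<Rightarrow> 'u"
  tv :: 'u
  fv :: 'u
  cval :: "'c \<Rightarrow> 'u"

fun den :: "('c \<Rightarrow> ty) \<Rightarrow> ('c, 'u) interp \<Rightarrow> 'u list \<Rightarrow> 'c tm \<Rightarrow> 'u \<Rightarrow> bool" where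
  "den ct I rho (Var n a) v = (n < length rho \<and> v = rho ! n)"
| "den ct I rho (Const c) v = (v = cval I c)"
| "den ct I rho (EqC a) v =
     (v \<in> Dom I (a \<Rightarrow>\<^sub>T a \<Rightarrow>\<^sub>T TO) \<and>
      (\<forall>x\<in>Dom I a. \<forall>y\<in>Dom I a. iapp I (iapp I v x) y = (if x = y then tv I else fv I)))"
| "den ct I rho NegC v =
     (v \<in> Dom I (TO \<Rightarrow>\<^sub>T TO) \<and> iapp I v (tv I) = fv I \<and> iapp I v (fv I) = tv I)"
| "den ct I rho ConjC v =
     (v \<in> Dom I (TO \<Rightarrow>\<^sub>T TO \<Rightarrow>\<^sub>T TO) \<and>
      (\<forall>x\<in>Dom I TO. \<forall>y\<in>Dom I TO.
         iapp I (iapp I v x) y = (if x = tv I \<and> y = tv I then tv I else fv I)))"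
| "den ct I rho DisjC v =
     (v \<in> Dom I (TO \<Rightarrow>\<^sub>T TO \<Rightarrow>\<^sub>T TO) \<and>
      (\<forall>x\<in>Dom I TO. \<forall>y\<in>Dom I TO.
         iapp I (iapp I v x) y = (if x = tv I \<or> y = tv I then tv I else fv I)))"
| "den ct I rho (App s t) v = (\<exists>f x. den ct I rho s f \<and> den ct I rho t x \<and> v = iapp I f x)"
| "den ct I rho (Abs a t) v =
     (v \<in> Dom I (TFun a (ty_of ct t)) \<and> (\<forall>x\<in>Dom I a. den ct I (x # rho) t (iapp I v x)))"

definition is_interp :: "('c \<Rightarrow> ty) \<Rightarrow> ('c, 'u) interp \<Rightarrow> bool" where
  "is_interp ct I \<longleftrightarrow>
     Dom I TO = {tv I, fv I} \<and> tv I \<noteq> fv I \<and>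
     (\<forall>a. Dom I a \<noteq> {}) \<and>
     (\<forall>a b f x. f \<in> Dom I (a \<Rightarrow>\<^sub>T b) \<longrightarrow> x \<in> Dom I a \<longrightarrow> iapp I f x \<in> Dom I b) \<and>
     (\<forall>a b f g. f \<in> Dom I (a \<Rightarrow>\<^sub>T b) \<longrightarrow> g \<in> Dom I (a \<Rightarrow>\<^sub>T b) \<longrightarrow>
        (\<forall>x\<in>Dom I a. iapp I f x = iapp I g x) \<longrightarrow> f = g) \<and>
     (\<forall>c. cval I c \<in> Dom I (ct c)) \<and>
     (\<forall>G t a rho. tyck ct G t = Some a \<longrightarrow> length rho = length G \<longrightarrow>
        (\<forall>i<length G. rho ! i \<in> Dom I (G ! i)) \<longrightarrow> (\<exists>v. den ct I rho t v))"

definition Interps :: "('c \<Rightarrow> ty) \<Rightarrow> ('c, 'u) interp set" where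
  "Interps ct = {I. is_interp ct I}"

definition V :: "('c \<Rightarrow> ty) \<Rightarrow> 'c tm \<Rightarrow> ('c, 'u) interp \<Rightarrow> 'u" where
  "V ct t I = (THE v. den ct I [] t v)"

definition valid_in :: "('c \<Rightarrow> ty) \<Rightarrow> 'c tm \<Rightarrow> ('c, 'u) interp \<Rightarrow> bool" where
  "valid_in ct p I \<longleftrightarrow> V ct p I = tv I"

definition valid :: "('c \<Rightarrow> ty) \<Rightarrow> 'u itself \<Rightarrow> 'c tm \<Rightarrow> bool" where
  "valid ct U p \<longleftrightarrow> (\<forall>I \<in> (Interps ct :: ('c, 'u) interp set). valid_in ct p I)"

definition Mod :: "('c \<Rightarrow> ty) \<Rightarrow> 'c tm \<Rightarrow> ('c, 'u) interp set" where
  "Mod ct p = {I \<in> Interps ct. valid_in ct p I}"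

definition separating :: "('c \<Rightarrow> ty) \<Rightarrow> ('c, 'u) interp \<Rightarrow> bool" where
  "separating ct I \<longleftrightarrow>
     (\<forall>a b r s. r \<in> closed_terms ct (a \<Rightarrow>\<^sub>T b) \<longrightarrow> s \<in> closed_terms ct (a \<Rightarrow>\<^sub>T b) \<longrightarrow>
        V ct r I \<noteq> V ct s I \<longrightarrow>
        (\<exists>t \<in> closed_terms ct a. V ct (App r t) I \<noteq> V ct (App s t) I))"

definition SepInterps :: "('c \<Rightarrow> ty) \<Rightarrow> ('c, 'u) interp set" where
  "SepInterps ct = {I \<in> Interps ct. separating ct I}"

definition open_Interps :: "('c \<Rightarrow> ty) \<Rightarrow> ('c, 'u) interp set set" where
  "open_Interps ct = {U. \<exists>F \<subseteq> Mod ct ` Sent ct. U = \<Union>F}"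

definition borel_Interps :: "('c \<Rightarrow> ty) \<Rightarrow> ('c, 'u) interp set set" where
  "borel_Interps ct = sigma_sets (Interps ct) (open_Interps ct)"

section \<open>Probabilities on sentences\<close>

definition prob_on_sentences :: "('c \<Rightarrow> ty) \<Rightarrow> 'u itself \<Rightarrow> ('c tm \<Rightarrow> real) \<Rightarrow> bool" where
  "prob_on_sentences ct U mu \<longleftrightarrow>
     (\<forall>p \<in> Sent ct. 0 \<le> mu p) \<and>
     (\<forall>p \<in> Sent ct. valid ct U p \<longrightarrow> mu p = 1) \<and>
     (\<forall>p \<in> Sent ct. \<forall>q \<in> Sent ct. valid ct U (neg (conj p q)) \<longrightarrow> mu (disj p q) = mu p + mu q)"

definition gaifman :: "('c \<Rightarrow> ty) \<Rightarrow> ('c tm \<Rightarrow> real) \<Rightarrow> bool" where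
  "gaifman ct mu \<longleftrightarrow>
     (\<forall>a b r s. r \<in> closed_terms ct (a \<Rightarrow>\<^sub>T b) \<longrightarrow> s \<in> closed_terms ct (a \<Rightarrow>\<^sub>T b) \<longrightarrow>
        mu (eq ct r s) =
          (INF ts \<in> {ts. set ts \<subseteq> closed_terms ct a}.
             mu (conj_list (map (\<lambda>t. eq ct (App r t) (App s t)) ts))))"

end

theory Submission
  imports Defs
begin

instance ty :: countable by countable_datatype
instance tm :: (countable) countable by countable_datatype

lemma tyck_ty_of: "tyck ct G t = Some a \<Longrightarrow> ty_of ct t = a"
  by (induction t arbitrary: G a) (auto split: option.splits ty.splits if_splits)

lemma is_interp_parts:
  assumes "is_interp ct I"
  shows "tv I \<noteq> fv I" "\<forall>c. cval I c \<in> Dom I (ct c)"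
    "\<forall>G t a rho. tyck ct G t = Some a \<longrightarrow> length rho = length G \<longrightarrow>
        (\<forall>i<length G. rho ! i \<in> Dom I (G ! i)) \<longrightarrow> (\<exists>v. den ct I rho t v)"
    apply (rule assms[unfolded is_interp_def, THEN conjunct2, THEN conjunct1])
   apply (rule assms[unfolded is_interp_def, THEN conjunct2, THEN conjunct2, THEN conjunct2,
       THEN conjunct2, THEN conjunct2, THEN conjunct1])
  apply (rule assms[unfolded is_interp_def, THEN conjunct2, THEN conjunct2, THEN conjunct2,
       THEN conjunct2, THEN conjunct2, THEN conjunct2])
  done

lemma interp_ext:
  assumes "is_interp ct I" "f \<in> Dom I (a \<Rightarrow>\<^sub>T b)" "g \<in> Dom I (a \<Rightarrow>\<^sub>T b)"
    "\<And>x. x \<in> Dom I a \<Longrightarrow> iapp I f x = iapp I g x"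
  shows "f = g"
  using assms unfolding is_interp_def by blast

lemma interp_cl:
  assumes "is_interp ct I" "f \<in> Dom I (a \<Rightarrow>\<^sub>T b)" "x \<in> Dom I a"
  shows "iapp I f x \<in> Dom I b"
  using assms unfolding is_interp_def by blast

lemma ext2:
  assumes I: "is_interp ct I" and "v \<in> Dom I (a \<Rightarrow>\<^sub>T b \<Rightarrow>\<^sub>T c)" "w \<in> Dom I (a \<Rightarrow>\<^sub>T b \<Rightarrow>\<^sub>T c)"
    and h: "\<forall>x\<in>Dom I a. \<forall>y\<in>Dom I b. iapp I (iapp I v x) y = iapp I (iapp I w x) y"
  shows "v = w"
proof (rule interp_ext[OF I assms(2,3)])
  fix x assume x: "x \<in> Dom I a"
  show "iapp I v x = iapp I w x"
    by (rule interp_ext[OF I interp_cl[OF I assms(2) x] interp_cl[OF I assms(3) x]])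
      (use h x in auto)
qed

lemma domO: "is_interp ct I \<Longrightarrow> Dom I TO = {tv I, fv I}"
  unfolding is_interp_def by (erule conjE)

lemma den_unique:
  assumes I: "is_interp ct I"
  shows "den ct I rho t v \<Longrightarrow> den ct I rho t w \<Longrightarrow> v = w"
proof (induction t arbitrary: rho v w)
  case (EqC a)
  show ?case by (rule ext2[where a=a and b=a and c=TO, OF I]) (use EqC.prems in auto)
next
  case NegC
  show ?case
    by (rule interp_ext[where a=TO and b=TO, OF I]) (use NegC.prems in \<open>auto simp add: domO[OF I]\<close>)
next
  case ConjC
  show ?case by (rule ext2[where a=TO and b=TO and c=TO, OF I]) (use ConjC.prems in auto)
next
  case DisjC
  show ?case by (rule ext2[where a=TO and b=TO and c=TO, OF I]) (use DisjC.prems in auto)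
next
  case (App s t)
  from App.prems(1) obtain f x where a: "den ct I rho s f" "den ct I rho t x" "v = iapp I f x" by auto
  from App.prems(2) obtain f' x' where b: "den ct I rho s f'" "den ct I rho t x'" "w = iapp I f' x'" by auto
  have "f = f'" by (rule App.IH(1)[OF a(1) b(1)])
  moreover have "x = x'" by (rule App.IH(2)[OF a(2) b(2)])
  ultimately show ?case using a(3) b(3) by simp
next
  case (Abs a t)
  from Abs.prems have v: "v \<in> Dom I (TFun a (ty_of ct t))" "\<forall>x\<in>Dom I a. den ct I (x # rho) t (iapp I v x)"
    and w: "w \<in> Dom I (TFun a (ty_of ct t))" "\<forall>x\<in>Dom I a. den ct I (x # rho) t (iapp I w x)" by simp_all
  show ?case
  proof (rule interp_ext[OF I v(1) w(1)])
    fix x assume "x \<in> Dom I a"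
    then show "iapp I v x = iapp I w x" using Abs.IH v(2) w(2) by blast
  qed
qed simp_all

lemma den_ty:
  assumes I: "is_interp ct I"
  shows "tyck ct G t = Some a \<Longrightarrow> length rho = length G \<Longrightarrow> (\<forall>i<length G. rho!i \<in> Dom I (G!i))
    \<Longrightarrow> den ct I rho t v \<Longrightarrow> v \<in> Dom I a"
proof (induction t arbitrary: G a rho v)
  case (Const c)
  then show ?case using is_interp_parts(2)[OF I] by auto
next
  case (App s t)
  from App.prems(1) obtain a' where s: "tyck ct G s = Some (a' \<Rightarrow>\<^sub>T a)" and t: "tyck ct G t = Some a'"
    by (auto split: option.splits ty.splits if_splits)
  from App.prems(4) obtain f x where "den ct I rho s f" "den ct I rho t x" "v = iapp I f x" by auto
  then show ?case using App.IH(1)[OF s App.prems(2,3)] App.IH(2)[OF t App.prems(2,3)] interp_cl[OF I] by blast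
next
  case (Abs b t)
  from Abs.prems(1) obtain c where "tyck ct (b # G) t = Some c" "a = b \<Rightarrow>\<^sub>T c"
    by auto
  then show ?case using Abs.prems(4) tyck_ty_of by auto
qed (auto split: if_splits)

lemma V_den:
  assumes I: "is_interp ct I" and t: "t \<in> closed_terms ct a"
  shows "den ct I [] t (V ct t I)"
proof -
  have "\<exists>v. den ct I [] t v" using is_interp_parts(3)[OF I] t unfolding closed_terms_def by force
  then show ?thesis unfolding V_def by (metis theI den_unique[OF I])
qed

lemma V_eq: "is_interp ct I \<Longrightarrow> t \<in> closed_terms ct a \<Longrightarrow> den ct I [] t v \<Longrightarrow> V ct t I = v"
  using V_den den_unique by metis

lemma V_dom:
  assumes I: "is_interp ct I" and t: "t \<in> closed_terms ct a"
  shows "V ct t I \<in> Dom I a"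
proof -
  have "den ct I [] t (V ct t I)" by (rule V_den[OF I t])
  then show ?thesis using den_ty[OF I, of "[]" t a "[]"] t by (auto simp: closed_terms_def)
qed

lemma App_ct: "r \<in> closed_terms ct (a \<Rightarrow>\<^sub>T b) \<Longrightarrow> t \<in> closed_terms ct a \<Longrightarrow> App r t \<in> closed_terms ct b"
  unfolding closed_terms_def by auto

lemma V_App:
  assumes I: "is_interp ct I" "r \<in> closed_terms ct (a \<Rightarrow>\<^sub>T b)" "t \<in> closed_terms ct a"
  shows "V ct (App r t) I = iapp I (V ct r I) (V ct t I)"
  using assms by (intro V_eq[OF I(1) App_ct[OF I(2,3)]]) (auto intro: V_den)

lemma EqC_ct: "EqC c \<in> closed_terms ct (c \<Rightarrow>\<^sub>T c \<Rightarrow>\<^sub>T TO)"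
  unfolding closed_terms_def by auto

lemma eq_ct: "r \<in> closed_terms ct c \<Longrightarrow> s \<in> closed_terms ct c \<Longrightarrow> eq ct r s \<in> Sent ct"
  unfolding Sent_def eq_def using tyck_ty_of[of ct "[]" r c] by (auto simp: closed_terms_def)

lemma valid_eq:
  assumes I: "is_interp ct I" and r: "r \<in> closed_terms ct c" and s: "s \<in> closed_terms ct c"
  shows "valid_in ct (eq ct r s) I \<longleftrightarrow> V ct r I = V ct s I"
proof -
  have tyr: "ty_of ct r = c" using r tyck_ty_of unfolding closed_terms_def by auto
  have e: "App (EqC c) r \<in> closed_terms ct (c \<Rightarrow>\<^sub>T TO)" by (rule App_ct[OF EqC_ct r])
  have "V ct (eq ct r s) I = iapp I (iapp I (V ct (EqC c) I) (V ct r I)) (V ct s I)"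
    unfolding eq_def tyr
    using V_App[OF I e s] V_App[OF I EqC_ct r] by simp
  also have "\<dots> = (if V ct r I = V ct s I then tv I else fv I)"
    using V_den[OF I EqC_ct] V_dom[OF I r] V_dom[OF I s] by auto
  finally show ?thesis unfolding valid_in_def using is_interp_parts(1)[OF I] by auto
qed

lemma conj_ct: "p \<in> Sent ct \<Longrightarrow> q \<in> Sent ct \<Longrightarrow> conj p q \<in> Sent ct"
  unfolding Sent_def conj_def closed_terms_def by auto

lemma ConjC_ct: "ConjC \<in> closed_terms ct (TO \<Rightarrow>\<^sub>T TO \<Rightarrow>\<^sub>T TO)"
  unfolding closed_terms_def by auto

lemma valid_conj:
  assumes I: "is_interp ct I" and p: "p \<in> Sent ct" and q: "q \<in> Sent ct"
  shows "valid_in ct (conj p q) I \<longleftrightarrow> valid_in ct p I \<and> valid_in ct q I"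
proof -
  have p': "p \<in> closed_terms ct TO" and q': "q \<in> closed_terms ct TO" using p q by (auto simp: Sent_def)
  have e: "App ConjC p \<in> closed_terms ct (TO \<Rightarrow>\<^sub>T TO)" by (rule App_ct[OF ConjC_ct p'])
  have "V ct (conj p q) I = iapp I (iapp I (V ct ConjC I) (V ct p I)) (V ct q I)"
    unfolding conj_def
    using V_App[OF I e q'] V_App[OF I ConjC_ct p'] by simp
  also have "\<dots> = (if V ct p I = tv I \<and> V ct q I = tv I then tv I else fv I)"
    using V_den[OF I ConjC_ct] V_dom[OF I p'] V_dom[OF I q'] by auto
  finally show ?thesis unfolding valid_in_def using is_interp_parts(1)[OF I] by auto
qed

lemma NegC_ct: "NegC \<in> closed_terms ct (TO \<Rightarrow>\<^sub>T TO)"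
  unfolding closed_terms_def by auto

lemma true_tm_eq: "true_tm = eq ct NegC NegC"
  unfolding true_tm_def eq_def by simp

lemma conj_list_props:
  assumes I: "is_interp ct I"
  shows "set ps \<subseteq> Sent ct \<Longrightarrow> conj_list ps \<in> Sent ct \<and>
    (valid_in ct (conj_list ps) I \<longleftrightarrow> (\<forall>p\<in>set ps. valid_in ct p I))"
proof (induction ps rule: conj_list.induct)
  case 1
  then show ?case
    using eq_ct[OF NegC_ct NegC_ct] valid_eq[OF I NegC_ct NegC_ct] by (simp add: true_tm_eq[of ct])
next
  case (2 p) then show ?case by simp
next
  case (3 p q ps)
  have p: "p \<in> Sent ct" and r: "set (q # ps) \<subseteq> Sent ct" using "3.prems" by auto
  have ih: "conj_list (q # ps) \<in> Sent ct"
    "valid_in ct (conj_list (q # ps)) I \<longleftrightarrow> (\<forall>p\<in>set (q # ps). valid_in ct p I)"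
    using "3.IH"[OF r] by auto
  show ?case using conj_ct[OF p ih(1)] valid_conj[OF I p ih(1)] ih(2)
    by (simp only: conj_list.simps(3)) simp
qed

lemma conj_list_Sent:
  assumes "Interps ct \<noteq> ({} :: ('c,'u) interp set)" "set ps \<subseteq> Sent ct"
  shows "conj_list ps \<in> Sent ct"
proof -
  obtain I :: "('c,'u) interp" where I: "is_interp ct I" using assms(1) unfolding Interps_def by auto
  show ?thesis using conj_list_props[OF I assms(2)] by simp
qed

lemma Mod_conj_list:
  assumes ps: "set ps \<subseteq> Sent ct"
  shows "(Mod ct (conj_list ps) :: ('c,'u) interp set) = Interps ct \<inter> (\<Inter>p\<in>set ps. Mod ct p)"
proof (rule set_eqI)
  fix I :: "('c,'u) interp"
  show "I \<in> Mod ct (conj_list ps) \<longleftrightarrow> I \<in> Interps ct \<inter> (\<Inter>p\<in>set ps. Mod ct p)"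
  proof (cases "is_interp ct I")
    case True
    then show ?thesis using conj_list_props[OF True ps] by (auto simp: Mod_def Interps_def)
  qed (simp add: Mod_def Interps_def)
qed

lemma INT_meas:
  assumes T: "countable T" and B: "\<And>t. t \<in> T \<Longrightarrow> B t \<in> sets M"
  shows "space M \<inter> (\<Inter>t\<in>T. B t) \<in> sets M"
proof (cases "T = {}")
  case True then show ?thesis by simp
next
  case False
  from False obtain t0 where t0: "t0 \<in> T" by blast
  have "(\<Inter>t\<in>T. B t) \<subseteq> B t0" using t0 by blast
  also have "B t0 \<subseteq> space M" by (rule sets.sets_into_space[OF B[OF t0]])
  finally have "space M \<inter> (\<Inter>t\<in>T. B t) = (\<Inter>t\<in>T. B t)" by blast
  moreover have "(\<Inter>t\<in>T. B t) \<in> sets M"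
    by (rule sets.countable_INT'[OF T False]) (use B in auto)
  ultimately show ?thesis by simp
qed

lemma inf_lemma:
  assumes P: "prob_space M" and T: "countable T" and B: "\<And>t. t \<in> T \<Longrightarrow> B t \<in> sets M"
  shows "space M \<inter> (\<Inter>t\<in>T. B t) \<in> sets M"
    "measure M (space M \<inter> (\<Inter>t\<in>T. B t)) =
     (INF ts \<in> {ts. set ts \<subseteq> T}. measure M (space M \<inter> (\<Inter>t\<in>set ts. B t)))"
proof -
  interpret prob_space M by fact
  show meas: "space M \<inter> (\<Inter>t\<in>T. B t) \<in> sets M"
    by (rule INT_meas[OF T B])
  have fin: "\<And>ts. set ts \<subseteq> T \<Longrightarrow> space M \<inter> (\<Inter>t\<in>set ts. B t) \<in> sets M"
    by (rule INT_meas[OF countable_finite[OF finite_set]]) (use B in auto)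
  let ?A = "space M \<inter> (\<Inter>t\<in>T. B t)"
  let ?F = "\<lambda>ts. measure M (space M \<inter> (\<Inter>t\<in>set ts. B t))"
  have bdd: "bdd_below (?F ` {ts. set ts \<subseteq> T})" by (rule bdd_belowI[of _ 0]) auto
  have "[] \<in> {ts. set ts \<subseteq> T}" by simp
  then have ne: "{ts. set ts \<subseteq> T} \<noteq> {}" by blast
  have le: "measure M ?A \<le> (INF ts \<in> {ts. set ts \<subseteq> T}. ?F ts)"
    by (rule cINF_greatest[OF ne]) (auto intro!: finite_measure_mono fin)
  show "measure M ?A = (INF ts \<in> {ts. set ts \<subseteq> T}. ?F ts)"
  proof (cases "T = {}")
    case True
    then show ?thesis by simp
  next
    case False
    define e where "e = from_nat_into T"
    have rng: "range e = T" unfolding e_def using range_from_nat_into[OF False T] .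
    define C where "C n = space M \<inter> (\<Inter>t\<in>set (map e [0..<n]). B t)" for n
    have Cs: "C n \<in> sets M" for n unfolding C_def by (rule fin) (use rng in auto)
    have dec: "decseq C" unfolding decseq_def C_def by auto
    have "(\<Inter>n. C n) = ?A"
    proof (rule set_eqI, rule iffI)
      fix x assume x: "x \<in> (\<Inter>n. C n)"
      have "x \<in> space M" using x by (auto simp: C_def)
      moreover have "x \<in> B t" if t: "t \<in> T" for t
      proof -
        from t rng obtain m where m: "t = e m" by blast
        have "x \<in> C (Suc m)" using x by blast
        then show ?thesis unfolding C_def m by auto
      qed
      ultimately show "x \<in> ?A" by blast
    next
      fix x assume "x \<in> ?A"
      then show "x \<in> (\<Inter>n. C n)" using rng by (auto simp: C_def)
    qed
    moreover have "range C \<subseteq> sets M" using Cs by blast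
    ultimately have lim: "(\<lambda>n. measure M (C n)) \<longlonglongrightarrow> measure M ?A"
      using finite_Lim_measure_decseq[OF _ dec] by simp
    have "(INF ts \<in> {ts. set ts \<subseteq> T}. ?F ts) \<le> measure M (C n)" for n
      unfolding C_def by (rule cINF_lower[OF bdd]) (use rng in auto)
    then have "(INF ts \<in> {ts. set ts \<subseteq> T}. ?F ts) \<le> measure M ?A"
      by (intro tendsto_lowerbound[OF lim]) auto
    with le show ?thesis by simp
  qed
qed

theorem mainTheorem14:
  fixes ct :: "'c::countable \<Rightarrow> ty"
    and mu :: "'c tm \<Rightarrow> real"
    and M :: "('c, 'u) interp measure"
  assumes "prob_on_sentences ct TYPE('u) mu"
    and "prob_space M"
    and "space M = Interps ct"
    and "sets M = borel_Interps ct"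
    and "\<forall>p \<in> Sent ct. measure M (Mod ct p) = mu p"
  shows "measure M (Interps ct - SepInterps ct) = 0 \<longleftrightarrow> gaifman ct mu"

proof -
  interpret P: prob_space M by fact
  note sp = assms(3)
  have Ms: "Mod ct p \<in> sets M" if "p \<in> Sent ct" for p
  proof -
    have "Mod ct p \<in> open_Interps ct" unfolding open_Interps_def
      by (rule CollectI, rule exI[of _ "{Mod ct p}"]) (use that in auto)
    then show ?thesis unfolding assms(4) borel_Interps_def by (rule sigma_sets.Basic)
  qed
  have ne: "Interps ct \<noteq> ({} :: ('c,'u) interp set)" using P.not_empty sp by simp
  define CT where "CT = closed_terms ct"
  define Pi where "Pi = {(a,b,r,s). r \<in> CT (a \<Rightarrow>\<^sub>T b) \<and> s \<in> CT (a \<Rightarrow>\<^sub>T b)}"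
  define B where "B r s t = (Mod ct (eq ct (App r t) (App s t)) :: ('c,'u) interp set)" for r s t
  define A where "A a r s = space M \<inter> (\<Inter>t\<in>CT a. B r s t)" for a r s
  define N where "N i = (case i of (a,b::ty,r,s) \<Rightarrow> A a r s - Mod ct (eq ct r s))" for i
  have Isep: "Interps ct - SepInterps ct = (\<Union>i\<in>Pi. N i)"
  proof (rule set_eqI)
    fix I :: "('c,'u) interp"
    show "I \<in> Interps ct - SepInterps ct \<longleftrightarrow> I \<in> (\<Union>i\<in>Pi. N i)"
    proof (cases "is_interp ct I")
      case False then show ?thesis
        by (auto simp: Interps_def N_def A_def sp Pi_def)
    next
      case I: True
      have eqv: "I \<in> N (a,b,r,s) \<longleftrightarrow> V ct r I \<noteq> V ct s I \<and> (\<forall>t\<in>CT a. V ct (App r t) I = V ct (App s t) I)"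
        if r: "r \<in> CT (a \<Rightarrow>\<^sub>T b)" and s: "s \<in> CT (a \<Rightarrow>\<^sub>T b)" for a b r s
      proof -
        have Bt: "I \<in> B r s t \<longleftrightarrow> V ct (App r t) I = V ct (App s t) I" if t: "t \<in> CT a" for t
          using valid_eq[OF I App_ct[OF r[unfolded CT_def] t[unfolded CT_def]] App_ct[OF s[unfolded CT_def] t[unfolded CT_def]]]
          by (simp add: B_def Mod_def Interps_def I)
        have E: "I \<in> Mod ct (eq ct r s) \<longleftrightarrow> V ct r I = V ct s I"
          using valid_eq[OF I r[unfolded CT_def] s[unfolded CT_def]] by (simp add: Mod_def Interps_def I)
        have "I \<in> N (a,b,r,s) \<longleftrightarrow> (\<forall>t\<in>CT a. I \<in> B r s t) \<and> I \<notin> Mod ct (eq ct r s)"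
          using I by (simp add: N_def A_def sp Interps_def)
        then show ?thesis using Bt E by auto
      qed
      have "I \<in> (\<Union>i\<in>Pi. N i) \<longleftrightarrow> (\<exists>a b r s. r \<in> CT (a \<Rightarrow>\<^sub>T b) \<and> s \<in> CT (a \<Rightarrow>\<^sub>T b) \<and>
           V ct r I \<noteq> V ct s I \<and> (\<forall>t\<in>CT a. V ct (App r t) I = V ct (App s t) I))"
        (is "?L \<longleftrightarrow> ?R")
      proof
        assume ?L
        then obtain a b r s where "(a,b,r,s) \<in> Pi" "I \<in> N (a,b,r,s)" by auto
        then show ?R using eqv unfolding Pi_def by blast
      next
        assume ?R
        then obtain a b r s where "r \<in> CT (a \<Rightarrow>\<^sub>T b)" "s \<in> CT (a \<Rightarrow>\<^sub>T b)"
          "V ct r I \<noteq> V ct s I" "\<forall>t\<in>CT a. V ct (App r t) I = V ct (App s t) I" by blast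
        then show ?L using eqv[of r a b s] unfolding Pi_def by blast
      qed
      then show ?thesis using I
        unfolding SepInterps_def separating_def Interps_def CT_def by auto
    qed
  qed
  have key: "N i \<in> sets M \<and> (measure M (N i) = 0 \<longleftrightarrow>
      mu (eq ct r s) = (INF ts \<in> {ts. set ts \<subseteq> closed_terms ct a}.
             mu (conj_list (map (\<lambda>t. eq ct (App r t) (App s t)) ts))))"
    if i: "i = (a,b,r,s)" and r: "r \<in> CT (a \<Rightarrow>\<^sub>T b)" and s: "s \<in> CT (a \<Rightarrow>\<^sub>T b)" for i a b r s
  proof -
    have Bs: "B r s t \<in> sets M" if "t \<in> CT a" for t
      unfolding B_def using that r s by (intro Ms eq_ct App_ct) (auto simp: CT_def)
    note il = inf_lemma[where T="CT a" and B="B r s", OF assms(2) countableI_type Bs]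
    have Es: "Mod ct (eq ct r s) \<in> sets M" using r s by (intro Ms eq_ct) (auto simp: CT_def)
    have sub: "Mod ct (eq ct r s) \<subseteq> A a r s"
    proof
      fix I :: "('c,'u) interp" assume IM: "I \<in> Mod ct (eq ct r s)"
      then have I: "is_interp ct I" by (simp add: Mod_def Interps_def)
      have "V ct r I = V ct s I" using valid_eq[OF I r[unfolded CT_def] s[unfolded CT_def]] IM
        by (simp add: Mod_def)
      have "I \<in> B r s t" if t: "t \<in> CT a" for t
      proof -
        have r': "r \<in> closed_terms ct (a \<Rightarrow>\<^sub>T b)" and s': "s \<in> closed_terms ct (a \<Rightarrow>\<^sub>T b)"
          and t': "t \<in> closed_terms ct a" using r s t by (simp_all add: CT_def)
        have "V ct (App r t) I = V ct (App s t) I"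
          using V_App[OF I r' t'] V_App[OF I s' t'] \<open>V ct r I = V ct s I\<close> by simp
        then show ?thesis using valid_eq[OF I App_ct[OF r' t'] App_ct[OF s' t']] I
          by (simp add: B_def Mod_def Interps_def)
      qed
      then show "I \<in> A a r s" unfolding A_def sp using I by (simp add: Interps_def)
    qed
    have NA: "N i = A a r s - Mod ct (eq ct r s)" using i by (simp add: N_def)
    have mN: "measure M (N i) = measure M (A a r s) - mu (eq ct r s)"
    proof -
      have "eq ct r s \<in> Sent ct" using r s by (intro eq_ct) (auto simp: CT_def)
      then have "measure M (Mod ct (eq ct r s)) = mu (eq ct r s)" using assms(5) by blast
      then show ?thesis unfolding NA using P.finite_measure_Diff[OF il(1)[folded A_def] Es sub] by simp
    qed
    have cong: "mu (conj_list (map (\<lambda>t. eq ct (App r t) (App s t)) ts)) =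
        measure M (space M \<inter> (\<Inter>t\<in>set ts. B r s t))" if ts: "ts \<in> {ts. set ts \<subseteq> closed_terms ct a}" for ts
    proof -
      have ss: "set (map (\<lambda>t. eq ct (App r t) (App s t)) ts) \<subseteq> Sent ct"
        using ts r s by (auto simp: CT_def intro!: eq_ct App_ct)
      have m: "measure M (Mod ct (conj_list (map (\<lambda>t. eq ct (App r t) (App s t)) ts))) =
          mu (conj_list (map (\<lambda>t. eq ct (App r t) (App s t)) ts))"
        using assms(5) conj_list_Sent[OF ne ss] by blast
      show ?thesis unfolding m[symmetric] Mod_conj_list[OF ss] by (simp add: sp B_def)
    qed
    have "measure M (A a r s) = (INF ts \<in> {ts. set ts \<subseteq> CT a}. measure M (space M \<inter> (\<Inter>t\<in>set ts. B r s t)))"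
      unfolding A_def by (rule il(2))
    also have "\<dots> = (INF ts \<in> {ts. set ts \<subseteq> closed_terms ct a}.
             mu (conj_list (map (\<lambda>t. eq ct (App r t) (App s t)) ts)))"
      unfolding CT_def using cong by (intro INF_cong) auto
    finally have mA: "measure M (A a r s) = (INF ts \<in> {ts. set ts \<subseteq> closed_terms ct a}.
             mu (conj_list (map (\<lambda>t. eq ct (App r t) (App s t)) ts)))" .
    have "N i \<in> sets M" unfolding NA using il(1) Es by (simp add: A_def sets.Diff)
    moreover have "measure M (N i) = 0 \<longleftrightarrow> mu (eq ct r s) = (INF ts \<in> {ts. set ts \<subseteq> closed_terms ct a}.
             mu (conj_list (map (\<lambda>t. eq ct (App r t) (App s t)) ts)))"
      unfolding mN mA by linarith
    ultimately show ?thesis by blast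
  qed
  have Nsets: "N i \<in> sets M" if "i \<in> Pi" for i using key that unfolding Pi_def by auto
  have z: "measure M X = 0 \<longleftrightarrow> X \<in> null_sets M" if "X \<in> sets M" for X
    using that P.emeasure_eq_measure[of X] by (auto simp: null_sets_def)
  have U: "(\<Union>i\<in>Pi. N i) \<in> sets M" by (rule sets.countable_UN'') (use Nsets in auto)
  have "measure M (\<Union>i\<in>Pi. N i) = 0 \<longleftrightarrow> (\<forall>i\<in>Pi. measure M (N i) = 0)"
  proof
    assume "measure M (\<Union>i\<in>Pi. N i) = 0"
    then have "(\<Union>i\<in>Pi. N i) \<in> null_sets M" using z U by blast
    then show "\<forall>i\<in>Pi. measure M (N i) = 0"
      using null_sets_subset Nsets z by (metis UN_upper)
  next
    assume "\<forall>i\<in>Pi. measure M (N i) = 0"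
    then have "(\<Union>i\<in>Pi. N i) \<in> null_sets M"
      using null_sets_UN'[OF countableI_type] Nsets z by metis
    then show "measure M (\<Union>i\<in>Pi. N i) = 0" using z U by blast
  qed
  also have "\<dots> \<longleftrightarrow> gaifman ct mu"
    unfolding gaifman_def Pi_def using key by (auto simp: CT_def)
  finally show ?thesis unfolding Isep .
qed

end
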